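(* Let ${\bf u}\in\mathcal A^{\mathbb N}$ have its language closed under reversal. If $D({\bf u})<+\infty$, then there exists an integer $K$ such that every bispecial factor $w$ of ${\bf u}$ with $|w|\ge K$ satisfies $m(w)=0$ if $w\ne\widetilde w$, and $m(w)=\#E^=(w)-1$ if $w=\widetilde w$.
   Context: $\widetilde w$ is the reversal of $w$. Palindromic defect: for a finite word $w$ of length $n$, $D(w)=n+1-$(number of distinct palindromic factors of $w$, including the empty word), and $D({\bf u})=\sup D(w)$ over factors of ${\bf u}$. The language is closed under reversal if the reversal of every factor is a factor. For a factor $w$: $E^+(w)=\{b: wb\text{ factor}\}$, $E^-(w)=\{a: aw\text{ factor}\}$, $E(w)=\{(a,b): awb\text{ factor}\}$, $E^=(w)=\{a: awa\text{ factor}\}$, $m(w)=\#E(w)-\#E^+(w)-\#E^-(w)+1$. A factor is bispecial if $\#E^-(w)\ge2$ and $\#E^+(w)\ge 2$. *)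

theory Defs
  imports Main "HOL-Library.Sublist"
begin

definition is_factor :: "(nat \<Rightarrow> 'a) \<Rightarrow> 'a list \<Rightarrow> bool" where
  "is_factor u w \<longleftrightarrow> (\<exists>i. w = map u [i..<i + length w])"

definition closed_under_reversal :: "(nat \<Rightarrow> 'a) \<Rightarrow> bool" where
  "closed_under_reversal u \<longleftrightarrow> (\<forall>w. is_factor u w \<longrightarrow> is_factor u (rev w))"

(* palindromic factors of a finite word, including the empty word *)
definition pal_factors :: "'a list \<Rightarrow> 'a list set" where
  "pal_factors w = {p. sublist p w \<and> rev p = p}"

definition defect :: "'a list \<Rightarrow> int" where
  "defect w = int (length w) + 1 - int (card (pal_factors w))"

definition finite_defect :: "(nat \<Rightarrow> 'a) \<Rightarrow> bool" where
  "finite_defect u \<longleftrightarrow> (\<exists>B::int. \<forall>w. is_factor u w \<longrightarrow> defect w \<le> B)"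

definition ext_right :: "(nat \<Rightarrow> 'a) \<Rightarrow> 'a list \<Rightarrow> 'a set" where
  "ext_right u w = {b. is_factor u (w @ [b])}"

definition ext_left :: "(nat \<Rightarrow> 'a) \<Rightarrow> 'a list \<Rightarrow> 'a set" where
  "ext_left u w = {a. is_factor u (a # w)}"

definition ext_both :: "(nat \<Rightarrow> 'a) \<Rightarrow> 'a list \<Rightarrow> ('a \<times> 'a) set" where
  "ext_both u w = {(a, b). is_factor u (a # w @ [b])}"

definition ext_eq :: "(nat \<Rightarrow> 'a) \<Rightarrow> 'a list \<Rightarrow> 'a set" where
  "ext_eq u w = {a. is_factor u (a # w @ [a])}"

definition bilateral_mult :: "(nat \<Rightarrow> 'a) \<Rightarrow> 'a list \<Rightarrow> int" where
  "bilateral_mult u w = int (card (ext_both u w)) - int (card (ext_right u w))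
                        - int (card (ext_left u w)) + 1"

definition bispecial :: "(nat \<Rightarrow> 'a) \<Rightarrow> 'a list \<Rightarrow> bool" where
  "bispecial u w \<longleftrightarrow> is_factor u w \<and> card (ext_left u w) \<ge> 2 \<and> card (ext_right u w) \<ge> 2"

end

theory Submission
  imports Defs "HOL-Library.Sublist"
begin


lemma finite_pal: "finite (pal_factors y)"
proof -
  have "pal_factors y \<subseteq> set (sublists y)" by (auto simp: pal_factors_def)
  thus ?thesis by (rule finite_subset) simp
qed

lemma new_pal_le1: "card {s. suffix s (y@[c]) \<and> rev s = s \<and> \<not> sublist s y} \<le> 1"
proof -
  have "\<forall>s1\<in>{s. suffix s (y@[c]) \<and> rev s = s \<and> \<not> sublist s y}.
        \<forall>s2\<in>{s. suffix s (y@[c]) \<and> rev s = s \<and> \<not> sublist s y}. s1 = s2"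
  proof (intro ballI)
    fix s1 s2 assume a1: "s1 \<in> {s. suffix s (y@[c]) \<and> rev s = s \<and> \<not> sublist s y}"
      and a2: "s2 \<in> {s. suffix s (y@[c]) \<and> rev s = s \<and> \<not> sublist s y}"
    have key: "s = t" if h: "suffix s t" "suffix t (y@[c])" "rev s = s" "rev t = t" "\<not> sublist s y" for s t
    proof (rule ccontr)
      assume ne: "s \<noteq> t"
      obtain z where t: "t = z @ s" using h(1) unfolding suffix_def by blast
      have "rev t = rev s @ rev z" using t by simp
      hence t2: "t = s @ rev z" using h(3,4) by simp
      have "z \<noteq> []" using ne t by auto
      hence "rev z \<noteq> []" by simp
      then obtain z' d where "rev z = z' @ [d]" by (metis rev_exhaust)
      with t2 have "t = (s @ z') @ [d]" by simp
      with h(2) have "suffix (s@z') y" by (auto simp: suffix_def)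
      hence "sublist s y" by (meson sublist_append_rightI sublist_order.order_trans suffix_imp_sublist)
      with h(5) show False by simp
    qed
    from a1 a2 have "suffix s1 s2 \<or> suffix s2 s1" using suffix_same_cases by blast
    thus "s1 = s2"
    proof
      assume "suffix s1 s2" thus ?thesis using key[of s1 s2] a1 a2 by blast
    next
      assume "suffix s2 s1" thus ?thesis using key[of s2 s1] a1 a2 by blast
    qed
  qed
  thus ?thesis using card_le_Suc0_iff_eq
    by (metis (no_types, lifting) One_nat_def card.infinite zero_le_one)
qed

lemma pal_snoc_subset: "pal_factors (y@[c]) \<subseteq> pal_factors y \<union> {s. suffix s (y@[c]) \<and> rev s = s \<and> \<not> sublist s y}"
  by (auto simp: pal_factors_def sublist_snoc)

lemma card_pal_snoc: "card (pal_factors (y@[c])) \<le> card (pal_factors y) + 1"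
proof -
  have "card (pal_factors (y@[c])) \<le> card (pal_factors y \<union> {s. suffix s (y@[c]) \<and> rev s = s \<and> \<not> sublist s y})"
  proof (rule card_mono)
    have "{s. suffix s (y@[c]) \<and> rev s = s \<and> \<not> sublist s y} \<subseteq> set (sublists (y@[c]))" by auto
    hence "finite {s. suffix s (y@[c]) \<and> rev s = s \<and> \<not> sublist s y}" by (rule finite_subset) simp
    thus "finite (pal_factors y \<union> {s. suffix s (y@[c]) \<and> rev s = s \<and> \<not> sublist s y})"
      using finite_pal by simp
  qed (rule pal_snoc_subset)
  also have "\<dots> \<le> card (pal_factors y) + card {s. suffix s (y@[c]) \<and> rev s = s \<and> \<not> sublist s y}"
    by (rule card_Un_le)
  finally show ?thesis using new_pal_le1[of y c] by linarith
qed

lemma pal_snoc_eq: "(\<forall>s. suffix s (y@[c]) \<and> rev s = s \<longrightarrow> sublist s y) \<Longrightarrow> pal_factors (y@[c]) = pal_factors y"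
  by (auto simp: pal_factors_def sublist_snoc)

lemma defect_snoc_mono: "defect y \<le> defect (y@[c])"
  using card_pal_snoc[of y c] by (simp add: defect_def)

lemma defect_snoc_eq: "defect (y@[c]) = defect y \<Longrightarrow> \<exists>s. suffix s (y@[c]) \<and> rev s = s \<and> \<not> sublist s y"
proof (rule ccontr)
  assume a: "defect (y@[c]) = defect y" "\<not> (\<exists>s. suffix s (y@[c]) \<and> rev s = s \<and> \<not> sublist s y)"
  hence "pal_factors (y@[c]) = pal_factors y" using pal_snoc_eq[of y c] by blast
  with a(1) show False by (simp add: defect_def)
qed




definition seg :: "(nat \<Rightarrow> 'a) \<Rightarrow> nat \<Rightarrow> nat \<Rightarrow> 'a list" where
  "seg u i n = map u [i..<i+n]"

lemma length_seg [simp]: "length (seg u i n) = n"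
  by (simp add: seg_def)

lemma seg_nth [simp]: "t < n \<Longrightarrow> seg u i n ! t = u (i+t)"
  by (simp add: seg_def)

lemma seg_eq_iff: "seg u i n = seg u j n \<longleftrightarrow> (\<forall>t<n. u(i+t) = u(j+t))"
  by (auto simp: list_eq_iff_nth_eq)

lemma seg_rev_iff: "seg u i n = rev (seg u j n) \<longleftrightarrow> (\<forall>t<n. u(i+t) = u(j+n-1-t))"
  by (auto simp: list_eq_iff_nth_eq rev_nth)

lemma seg_pal_iff: "rev (seg u i n) = seg u i n \<longleftrightarrow> (\<forall>t<n. u(i+t) = u(i+n-1-t))"
  by (metis seg_rev_iff)

lemma seg_append: "seg u i (m+n) = seg u i m @ seg u (i+m) n"
  using upt_add_eq_append[of i "i+m" n] by (simp add: seg_def add.assoc)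

lemma seg_drop: "k \<le> n \<Longrightarrow> drop k (seg u i n) = seg u (i+k) (n-k)"
  by (simp add: seg_def drop_map)

lemma seg_Suc: "seg u i (Suc n) = seg u i n @ [u (i+n)]"
  using seg_append[of u i n 1] by (simp add: seg_def)

lemma is_factor_seg: "is_factor u w \<longleftrightarrow> (\<exists>i. w = seg u i (length w))"
  by (simp add: is_factor_def seg_def)

lemma sublist_seg: "i \<le> k \<Longrightarrow> k + l \<le> i + n \<Longrightarrow> sublist (seg u k l) (seg u i n)"
proof -
  assume a: "i \<le> k" "k + l \<le> i + n"
  have "seg u i n = seg u i (k-i) @ seg u k l @ seg u (k+l) (i+n-k-l)"
    using a seg_append[of u i "k-i" "l + (i+n-k-l)"] seg_append[of u k l "i+n-k-l"] by simp
  thus ?thesis by (metis sublist_appendI)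
qed

lemma prefix_good:
  assumes "finite_defect u"
  shows "\<exists>n0. \<forall>j>n0. \<exists>l\<le>j. (\<forall>t<l. u(j-l+t) = u(j-1-t)) \<and>
           (\<forall>k. k+l < j \<longrightarrow> \<not>(\<forall>t<l. u(k+t) = u(j-l+t)))"
proof -
  define D where "D j = defect (seg u 0 j)" for j
  obtain B where B: "\<And>w. is_factor u w \<Longrightarrow> defect w \<le> B" using assms by (auto simp: finite_defect_def)
  have DB: "D j \<le> B" for j unfolding D_def by (rule B) (auto simp: is_factor_seg)
  have Dmono1: "D j \<le> D (Suc j)" for j unfolding D_def seg_Suc by (rule defect_snoc_mono)
  have Dmono: "D j \<le> D k" if "j \<le> k" for j k
    using that
  proof (induction k rule: dec_induct)
    case base show ?case by simp
  next
    case (step k) thus ?case using Dmono1[of k] by linarith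
  qed
  have fin: "finite (range D)"
  proof (rule finite_subset)
    show "range D \<subseteq> {D 0..B}" using Dmono DB by auto
  qed simp
  define M where "M = Max (range D)"
  have "M \<in> range D" unfolding M_def using fin by (intro Max_in) auto
  then obtain n0 where n0: "D n0 = M" by auto
  have Mmax: "D j \<le> M" for j unfolding M_def using fin by simp
  show ?thesis
  proof (rule exI[of _ n0], intro allI impI)
    fix j assume j: "n0 < j"
    then obtain j' where jj: "j = Suc j'" "n0 \<le> j'" by (cases j) auto
    have "D j' \<le> D j" using Dmono1[of j'] jj(1) by simp
    moreover have "D j \<le> D j'" using Mmax[of j] Dmono[OF jj(2)] n0 by simp
    ultimately have "D j = D j'" by simp
    hence "defect (seg u 0 j' @ [u j']) = defect (seg u 0 j')" unfolding D_def jj seg_Suc by simp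
    from defect_snoc_eq[OF this] obtain s where s: "suffix s (seg u 0 j' @ [u j'])" "rev s = s" "\<not> sublist s (seg u 0 j')"
      by blast
    define l where "l = length s"
    have sj: "suffix s (seg u 0 j)" using s(1) jj seg_Suc[of u 0 j'] by simp
    hence lj: "l \<le> j" unfolding l_def using suffix_length_le by fastforce
    have "s = drop (j - l) (seg u 0 j)"
      using suffix_take[OF sj] unfolding l_def by (metis append_take_drop_id length_seg same_append_eq)
    hence sseg: "s = seg u (j-l) l" using lj by (simp add: seg_drop)
    show "\<exists>l\<le>j. (\<forall>t<l. u(j-l+t) = u(j-1-t)) \<and> (\<forall>k. k+l < j \<longrightarrow> \<not>(\<forall>t<l. u(k+t) = u(j-l+t)))"
    proof (intro exI conjI allI impI)
      show "l \<le> j" by fact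
      fix t assume "t < l"
      thus "u(j-l+t) = u(j-1-t)" using s(2) sseg seg_pal_iff[of u "j-l" l] lj
        by (metis Nat.add_diff_assoc2 le_add_diff_inverse2)
    next
      fix k assume k: "k + l < j"
      show "\<not>(\<forall>t<l. u(k+t) = u(j-l+t))"
      proof
        assume "\<forall>t<l. u(k+t) = u(j-l+t)"
        hence "seg u k l = s" using sseg seg_eq_iff by metis
        moreover have "sublist (seg u k l) (seg u 0 j')" using k jj by (intro sublist_seg) auto
        ultimately show False using s(3) by simp
      qed
    qed
  qed
qed




definition Vo :: "(nat \<Rightarrow> 'a) \<Rightarrow> 'a list \<Rightarrow> nat \<Rightarrow> bool" where
  "Vo u v k \<longleftrightarrow> seg u k (length v) = v \<or> seg u k (length v) = rev v"

definition GoodI :: "(nat \<Rightarrow> 'a) \<Rightarrow> nat \<Rightarrow> nat \<Rightarrow> bool" where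
  "GoodI u q L \<longleftrightarrow> (\<exists>l\<le>L. (\<forall>t<l. u(q+L-l+t) = u(q+L-1-t)) \<and>
      (\<forall>k. q \<le> k \<longrightarrow> k+l < q+L \<longrightarrow> \<not>(\<forall>t<l. u(k+t) = u(q+L-l+t))))"

lemma Q_I:
  assumes "finite_defect u"
  shows "\<exists>n0. \<forall>i L. n0 < L \<longrightarrow> (\<exists>q. (seg u q L = seg u i L \<or> seg u q L = rev (seg u i L)) \<and> GoodI u q L)"
proof -
  obtain n0 where n0: "\<And>j. n0 < j \<Longrightarrow> \<exists>l\<le>j. (\<forall>t<l. u(j-l+t) = u(j-1-t)) \<and>
           (\<forall>k. k+l < j \<longrightarrow> \<not>(\<forall>t<l. u(k+t) = u(j-l+t)))"
    using prefix_good[OF assms] by blast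
  show ?thesis
  proof (rule exI[of _ n0], intro allI impI)
    fix i L :: nat assume L: "n0 < L"
    define x where "x = seg u i L"
    define P where "P j \<longleftrightarrow> L \<le> j \<and> (seg u (j-L) L = x \<or> seg u (j-L) L = rev x)" for j
    have "P (i+L)" by (simp add: P_def x_def)
    define j where "j = (LEAST j. P j)"
    have Pj: "P j" unfolding j_def by (rule LeastI) fact
    have jmin: "\<And>j'. j' < j \<Longrightarrow> \<not> P j'" unfolding j_def by (rule not_less_Least)
    have "n0 < j" using Pj L by (auto simp: P_def)
    then obtain l where l: "l \<le> j" "\<forall>t<l. u(j-l+t) = u(j-1-t)"
       "\<forall>k. k+l < j \<longrightarrow> \<not>(\<forall>t<l. u(k+t) = u(j-l+t))" using n0 by blast
    show "\<exists>q. (seg u q L = seg u i L \<or> seg u q L = rev (seg u i L)) \<and> GoodI u q L"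
    proof (cases "l \<le> L")
      case True
      have jL: "L \<le> j" using Pj by (simp add: P_def)
      have "GoodI u (j-L) L" unfolding GoodI_def
      proof (intro exI conjI allI impI)
        show "l \<le> L" by fact
        fix t assume "t < l" thus "u(j-L+L-l+t) = u(j-L+L-1-t)" using l(2) jL by simp
      next
        fix k assume "j - L \<le> k" "k + l < j - L + L"
        thus "\<not>(\<forall>t<l. u(k+t) = u(j-L+L-l+t))" using l(3) jL by simp
      qed
      thus ?thesis using Pj unfolding P_def x_def by blast
    next
      case False
      have jL: "L \<le> j" using Pj by (simp add: P_def)
      have "seg u (j-l) L = rev (seg u (j-L) L)" unfolding seg_rev_iff
        using l(2) False jL by auto
      hence "P (j-l+L)" using Pj unfolding P_def by auto
      moreover have "j - l + L < j" using False l(1) by simp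
      ultimately show ?thesis using jmin by blast
    qed
  qed
qed




lemma V_cases: "a \<in> {v, rev v} \<Longrightarrow> b \<in> {v, rev v} \<Longrightarrow> a = b \<or> a = rev b"
  by auto

lemma V_pal: assumes a: "a \<in> {v, rev v}" and b: "b \<in> {v, rev v}" and p: "rev b = b" shows "a = b"
proof -
  from b have "v = b \<or> v = rev b" by auto
  with p have "v = b" by auto
  thus ?thesis using a p by auto
qed

lemma CoreI:
  assumes nL: "length v < L" and q1: "Vo u v q" and q2: "Vo u v (q+L-length v)"
  and mid: "\<forall>k. q<k \<and> k<q+L-length v \<longrightarrow> \<not> Vo u v k" and G: "GoodI u q L"
  shows "\<forall>t<L. u(q+t) = u(q+L-1-t)"
proof -
  define n where "n = length v"
  obtain l where l: "l \<le> L" and PS: "\<forall>t<l. u(q+L-l+t) = u(q+L-1-t)"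
    and NO: "\<forall>k. q \<le> k \<longrightarrow> k+l < q+L \<longrightarrow> \<not>(\<forall>t<l. u(k+t) = u(q+L-l+t))"
    using G unfolding GoodI_def by blast
  define S where "S = q+L-l"
  have B: "seg u q n \<in> {v, rev v}" using q1 unfolding Vo_def n_def by auto
  have E: "seg u (q+L-n) n \<in> {v, rev v}" using q2 unfolding Vo_def n_def by auto
  have nL': "n < L" using nL n_def by simp
  show ?thesis
  proof (cases "n \<le> l")
    case True
    have "seg u S n = rev (seg u (q+L-n) n)" unfolding seg_rev_iff
    proof (intro allI impI)
      fix t assume "t < n"
      thus "u (S + t) = u (q + L - n + n - 1 - t)" using PS True nL' unfolding S_def by simp
    qed
    hence VS: "seg u S n \<in> {v, rev v}" using E by auto
    have "S \<le> q + L - n" using True l unfolding S_def by simp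
    moreover have "q \<le> S" using l unfolding S_def by simp
    ultimately consider "S = q" | "q < S \<and> S < q+L-n" | "S = q+L-n" by linarith
    thus ?thesis
    proof cases
      case 1
      hence "l = L" using l unfolding S_def by simp
      thus ?thesis using PS by simp
    next
      case 2
      hence "Vo u v S" using VS unfolding Vo_def n_def by auto
      thus ?thesis using mid 2 n_def by blast
    next
      case 3
      hence ln: "l = n" using l True nL' unfolding S_def by simp
      have "rev (seg u S n) = seg u S n" unfolding seg_pal_iff
      proof (intro allI impI)
        fix t assume "t < n"
        thus "u (S + t) = u (S + n - 1 - t)" using PS ln nL' unfolding S_def by simp
      qed
      hence "seg u q n = seg u S n" using V_pal B VS by blast
      hence "\<forall>t<l. u(q+t) = u(q+L-l+t)" using ln unfolding seg_eq_iff S_def by simp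
      moreover have "q + l < q + L" using ln nL' by simp
      ultimately show ?thesis using NO by blast
    qed
  next
    case False
    from V_cases[OF B E] show ?thesis
    proof
      assume BE: "seg u q n = seg u (q+L-n) n"
      have "\<forall>t<l. u((q+n-l)+t) = u(q+L-l+t)"
      proof (intro allI impI)
        fix t assume t: "t < l"
        have X: "\<forall>t'<n. u(q+t') = u(q+L-n+t')" using BE unfolding seg_eq_iff .
        have "u(q+(n-l+t)) = u(q+L-n+(n-l+t))" by (rule X[rule_format]) (use t False in simp)
        moreover have "q+(n-l+t) = (q+n-l)+t" using False by simp
        moreover have "q+L-n+(n-l+t) = q+L-l+t" using False nL' t by simp
        ultimately show "u((q+n-l)+t) = u(q+L-l+t)" by simp
      qed
      moreover have "q \<le> q+n-l" "(q+n-l)+l < q+L" using False nL' by auto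
      ultimately show ?thesis using NO by blast
    next
      assume BE: "seg u q n = rev (seg u (q+L-n) n)"
      have "\<forall>t<l. u(q+t) = u(q+L-l+t)"
      proof (intro allI impI)
        fix t assume t: "t < l"
        have "u(q+t) = u(q+L-n+n-1-t)" using BE t False unfolding seg_rev_iff by simp
        also have "\<dots> = u(q+L-1-t)" using nL' by simp
        also have "\<dots> = u(q+L-l+t)" using PS t by simp
        finally show "u(q+t) = u(q+L-l+t)" .
      qed
      moreover have "q + l < q+L" using False nL' by auto
      ultimately show ?thesis using NO by blast
    qed
  qed
qed




definition QP :: "(nat \<Rightarrow> 'a) \<Rightarrow> nat \<Rightarrow> bool" where
  "QP u n0 \<longleftrightarrow> (\<forall>i L. n0 < L \<longrightarrow> (\<exists>q. (seg u q L = seg u i L \<or> seg u q L = rev (seg u i L)) \<and> GoodI u q L))"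

lemma Vo_iff: "Vo u v k \<longleftrightarrow> seg u k (length v) \<in> {v, rev v}"
  unfolding Vo_def by auto

lemma R:
  assumes Q: "QP u n0"
  and m: "n0 < length v" and vi: "seg u i (length v) = v" and ij: "i < j" and vj: "Vo u v j"
  and none: "\<forall>k. i<k \<and> k<j \<longrightarrow> \<not> Vo u v k"
  shows "\<forall>t < j-i+length v. u(i+t) = u(j+length v-1-t)"
proof -
  define m where "m = length v"
  define L where "L = j-i+m"
  have mL: "m < L" "n0 < L" using ij m unfolding L_def m_def by auto
  obtain q where q: "seg u q L = seg u i L \<or> seg u q L = rev (seg u i L)" and G: "GoodI u q L"
    using Q mL unfolding QP_def by blast
  from q show ?thesis
  proof
    assume eq: "seg u q L = seg u i L"
    hence eqi: "\<And>t. t < L \<Longrightarrow> u(q+t) = u(i+t)" unfolding seg_eq_iff by blast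
    have sh: "k + m \<le> L \<Longrightarrow> seg u (q+k) m = seg u (i+k) m" for k
      unfolding seg_eq_iff using eqi by (metis add.assoc add_less_cancel_left less_le_trans)
    have P: "\<forall>t<L. u(q+t) = u(q+L-1-t)"
    proof (rule CoreI)
      show "length v < L" using mL m_def by simp
      show "Vo u v q" using sh[of 0] vi mL unfolding Vo_def m_def by simp
      show "Vo u v (q + L - length v)" using sh[of "j-i"] vj ij unfolding Vo_def m_def L_def
        by (simp add: add.commute)
      show "\<forall>k. q < k \<and> k < q + L - length v \<longrightarrow> \<not> Vo u v k"
      proof (intro allI impI)
        fix k assume k: "q < k \<and> k < q + L - length v"
        have c: "(k-q) + m \<le> L" using k unfolding m_def by arith
        have "seg u (q+(k-q)) m = seg u (i+(k-q)) m" by (rule sh[OF c])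
        hence "seg u k m = seg u (i+(k-q)) m" using k by simp
        moreover have "i < i+(k-q)" "i+(k-q) < j" using k ij unfolding L_def m_def by auto
        hence "\<not> Vo u v (i+(k-q))" using none by blast
        ultimately show "\<not> Vo u v k" unfolding Vo_def m_def by simp
      qed
    qed (rule G)
    show ?thesis
    proof (intro allI impI)
      fix t assume t: "t < j - i + length v"
      hence "u(i+t) = u(q+t)" using eqi L_def m_def by simp
      also have "\<dots> = u(q+L-1-t)" using P t L_def m_def by simp
      also have "\<dots> = u(i+(L-1-t))" using eqi[of "L-1-t"] t L_def m_def by (simp add: algebra_simps)
      also have "i+(L-1-t) = j+length v-1-t" using t ij unfolding L_def m_def by simp
      finally show "u(i+t) = u(j+length v-1-t)" .
    qed
  next
    assume eq: "seg u q L = rev (seg u i L)"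
    hence eqi: "\<And>t. t < L \<Longrightarrow> u(q+t) = u(i+L-1-t)" unfolding seg_rev_iff by blast
    have sh: "k + m \<le> L \<Longrightarrow> seg u (q+k) m = rev (seg u (i+L-m-k) m)" for k
      unfolding seg_rev_iff
    proof (intro allI impI)
      fix t assume "k+m \<le> L" "t < m"
      thus "u (q + k + t) = u (i + L - m - k + m - 1 - t)" using eqi[of "k+t"] by (simp add: algebra_simps)
    qed
    have shV: "k + m \<le> L \<Longrightarrow> Vo u v (q+k) \<longleftrightarrow> Vo u v (i+L-m-k)" for k
      using sh[of k] unfolding Vo_iff m_def by (auto simp: rev_swap)
    have P: "\<forall>t<L. u(q+t) = u(q+L-1-t)"
    proof (rule CoreI)
      show "length v < L" using mL m_def by simp
      show "Vo u v q" using shV[of 0] vj ij mL unfolding L_def m_def by simp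
      show "Vo u v (q + L - length v)" using shV[of "L-m"] vi mL unfolding Vo_def m_def
        by simp
      show "\<forall>k. q < k \<and> k < q + L - length v \<longrightarrow> \<not> Vo u v k"
      proof (intro allI impI)
        fix k assume k: "q < k \<and> k < q + L - length v"
        have c: "(k-q) + m \<le> L" using k unfolding m_def by arith
        have "Vo u v (q+(k-q)) \<longleftrightarrow> Vo u v (i+L-m-(k-q))" by (rule shV[OF c])
        hence "Vo u v k \<longleftrightarrow> Vo u v (i+L-m-(k-q))" using k by simp
        moreover have "i < i+L-m-(k-q)" "i+L-m-(k-q) < j" using k ij unfolding L_def m_def by auto
        hence "\<not> Vo u v (i+L-m-(k-q))" using none by blast
        ultimately show "\<not> Vo u v k" by simp
      qed
    qed (rule G)
    show ?thesis
    proof (intro allI impI)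
      fix t assume t: "t < j - i + length v"
      have "u(i+t) = u(q+(L-1-t))" using eqi[of "L-1-t"] t L_def m_def by simp
      also have "\<dots> = u(q+t)" using P[rule_format, of "L-1-t"] t L_def m_def by simp
      also have "\<dots> = u(i+L-1-t)" using eqi t L_def m_def by simp
      also have "i+L-1-t = j+length v-1-t" using t ij unfolding L_def m_def by simp
      finally show "u(i+t) = u(j+length v-1-t)" .
    qed
  qed
qed




lemma walk_count:
  fixes Ev :: "nat set" and dep arr :: "nat \<Rightarrow> 'v"
  assumes ne: "Ev \<noteq> {}"
  and fin: "finite (dep ` Ev \<union> arr ` Ev)"
  and A1: "\<And>i j. i \<in> Ev \<Longrightarrow> j \<in> Ev \<Longrightarrow> i < j \<Longrightarrow> (\<forall>k\<in>Ev. \<not> (i < k \<and> k < j)) \<Longrightarrow> arr i = dep j"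
  and A2: "\<And>d e. d \<in> Ev \<Longrightarrow> e \<in> Ev \<Longrightarrow> d < e \<Longrightarrow> dep e = dep d \<or> arr e = dep d \<Longrightarrow>
     \<exists>j\<in>Ev. d \<le> j \<and> arr j = dep d \<and> dep j = arr d \<and>
        (\<forall>e'\<in>Ev. d < e' \<and> e' < j \<longrightarrow> dep e' \<noteq> dep d \<and> arr e' \<noteq> dep d)"
  shows "card {{dep i, arr i} | i. i \<in> Ev \<and> dep i \<noteq> arr i} + 1 = card (dep ` Ev \<union> arr ` Ev)"
proof -
  define V where "V = dep ` Ev \<union> arr ` Ev"
  define C where "C = {{dep i, arr i} | i. i \<in> Ev \<and> dep i \<noteq> arr i}"
  define p0 where "p0 = (LEAST i. i \<in> Ev)"
  have p0E: "p0 \<in> Ev" unfolding p0_def using ne by (metis LeastI ex_in_conv)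
  have p0min: "\<And>i. i \<in> Ev \<Longrightarrow> p0 \<le> i" unfolding p0_def by (rule Least_le)
  define v0 where "v0 = dep p0"
  define vis where "vis y t \<longleftrightarrow> t \<in> Ev \<and> (dep t = y \<or> arr t = y)" for y t
  have prevE: "\<exists>k\<in>Ev. k < i \<and> arr k = dep i" if i: "i \<in> Ev" "p0 < i" for i
  proof -
    define K where "K = {k\<in>Ev. k < i}"
    have "finite K" "K \<noteq> {}" unfolding K_def using p0E i by auto
    define k where "k = Max K"
    have kK: "k \<in> K" unfolding k_def by (rule Max_in) fact+
    have "\<forall>k'\<in>Ev. \<not> (k < k' \<and> k' < i)"
      using Max_ge[OF \<open>finite K\<close>] unfolding K_def k_def by fastforce
    hence "arr k = dep i" using A1[of k i] kK i unfolding K_def by auto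
    thus ?thesis using kK unfolding K_def by auto
  qed
  have nextE: "\<exists>k\<in>Ev. t < k \<and> k \<le> p \<and> dep k = arr t" if t: "t \<in> Ev" "p \<in> Ev" "t < p" for t p
  proof -
    define k where "k = (LEAST k. k \<in> Ev \<and> t < k)"
    have kE: "k \<in> Ev \<and> t < k" unfolding k_def by (rule LeastI[of _ p]) (use t in auto)
    have kp: "k \<le> p" unfolding k_def by (rule Least_le) (use t in auto)
    have "\<forall>k'\<in>Ev. \<not> (t < k' \<and> k' < k)" unfolding k_def using not_less_Least by blast
    hence "arr t = dep k" using A1[of t k] kE t by auto
    thus ?thesis using kE kp by auto
  qed
  have finV: "finite V" using fin V_def by simp
  have finC: "finite C"
  proof (rule finite_subset)
    show "C \<subseteq> Pow V" unfolding C_def V_def by auto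
  qed (use finV in simp)
  have v0V: "v0 \<in> V" unfolding v0_def V_def using p0E by auto
  define fv where "fv y = (LEAST t. vis y t)" for y
  have F1: "fv y \<in> Ev \<and> arr (fv y) = y \<and> dep (fv y) \<noteq> y \<and> (\<forall>t. vis y t \<longrightarrow> fv y \<le> t)"
    if y: "y \<in> V" "y \<noteq> v0" for y
  proof -
    obtain t where t: "vis y t" using y unfolding V_def vis_def by auto
    have vt: "vis y (fv y)" unfolding fv_def by (rule LeastI) (rule t)
    have mn: "\<forall>t. vis y t \<longrightarrow> fv y \<le> t" unfolding fv_def by (auto intro: Least_le)
    have "dep (fv y) \<noteq> y"
    proof
      assume d: "dep (fv y) = y"
      have fE: "fv y \<in> Ev" using vt vis_def by simp
      show False
      proof (cases "fv y = p0")
        case True thus False using d y v0_def by simp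
      next
        case False
        hence "p0 < fv y" using p0min[OF fE] by simp
        then obtain k where "k \<in> Ev" "k < fv y" "arr k = dep (fv y)" using prevE fE by blast
        hence "vis y k" using d vis_def by simp
        thus False using mn \<open>k < fv y\<close> by fastforce
      qed
    qed
    thus ?thesis using vt mn unfolding vis_def by auto
  qed
  have low: "card (V - {v0}) \<le> card C"
  proof (rule card_inj_on_le[where f="\<lambda>y. {dep (fv y), arr (fv y)}"])
    show "(\<lambda>y. {dep (fv y), arr (fv y)}) ` (V - {v0}) \<subseteq> C"
      unfolding C_def using F1 by fastforce
    show "inj_on (\<lambda>y. {dep (fv y), arr (fv y)}) (V - {v0})"
    proof (rule inj_onI)
      fix y y' assume yV: "y \<in> V - {v0}" and y'V: "y' \<in> V - {v0}"
        and eq: "{dep (fv y), arr (fv y)} = {dep (fv y'), arr (fv y')}"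
      show "y = y'"
      proof (rule ccontr)
        assume ne: "y \<noteq> y'"
        have f: "fv y \<in> Ev" "arr (fv y) = y" "dep (fv y) \<noteq> y" "\<forall>t. vis y t \<longrightarrow> fv y \<le> t"
          using F1 yV by auto
        have f': "fv y' \<in> Ev" "arr (fv y') = y'" "dep (fv y') \<noteq> y'" "\<forall>t. vis y' t \<longrightarrow> fv y' \<le> t"
          using F1 y'V by auto
        have "dep (fv y) = y'" using eq f f' ne by (metis doubleton_eq_iff)
        hence "vis y' (fv y)" using f vis_def by simp
        hence le1: "fv y' \<le> fv y" using f' by blast
        have "dep (fv y') = y" using eq f f' ne by (metis doubleton_eq_iff)
        hence "vis y (fv y')" using f' vis_def by simp
        hence "fv y \<le> fv y'" using f by blast
        hence "fv y = fv y'" using le1 by simp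
        thus False using f f' ne by simp
      qed
    qed
  qed (rule finC)
  define fc where "fc c = (LEAST i. i \<in> Ev \<and> dep i \<noteq> arr i \<and> {dep i, arr i} = c)" for c
  have fcP: "fc c \<in> Ev \<and> dep (fc c) \<noteq> arr (fc c) \<and> {dep (fc c), arr (fc c)} = c" if "c \<in> C" for c
  proof -
    from that obtain i where "i \<in> Ev \<and> dep i \<noteq> arr i \<and> {dep i, arr i} = c" unfolding C_def by blast
    thus ?thesis unfolding fc_def by (rule LeastI)
  qed
  have fcmin: "\<And>i c. i \<in> Ev \<Longrightarrow> dep i \<noteq> arr i \<Longrightarrow> {dep i, arr i} = c \<Longrightarrow> fc c \<le> i"
    unfolding fc_def by (rule Least_le) simp
  have F2: "\<forall>t<fc c. \<not> vis (arr (fc c)) t" if cC: "c \<in> C" for c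
  proof (intro allI impI notI)
    fix t assume tp: "t < fc c" and vt: "vis (arr (fc c)) t"
    define p where "p = fc c"
    define y where "y = arr p"
    have pp: "p \<in> Ev" "dep p \<noteq> arr p" "{dep p, arr p} = c" using fcP[OF cC] p_def by auto
    define DD where "DD = {d\<in>Ev. d < p \<and> dep d = y}"
    have "DD \<noteq> {}"
    proof (cases "dep t = y")
      case True thus ?thesis using vt tp unfolding DD_def vis_def p_def y_def by auto
    next
      case False
      hence at: "arr t = y" "t \<in> Ev" using vt unfolding vis_def y_def p_def by auto
      obtain k where "k \<in> Ev" "t < k" "k \<le> p" "dep k = arr t" using nextE[OF at(2) pp(1)] tp p_def by auto
      moreover have "k \<noteq> p" using pp(2) at(1) \<open>dep k = arr t\<close> y_def by auto
      ultimately have "k \<in> DD" unfolding DD_def using at by auto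
      thus ?thesis by blast
    qed
    moreover have "finite DD" unfolding DD_def by auto
    ultimately have dD: "Max DD \<in> DD" by (rule Max_in[rotated])
    define d where "d = Max DD"
    have dmax: "\<And>d'. d' \<in> DD \<Longrightarrow> d' \<le> d" unfolding d_def using \<open>finite DD\<close> by simp
    have dd: "d \<in> Ev" "d < p" "dep d = y" using dD unfolding DD_def d_def by auto
    obtain j where j: "j \<in> Ev" "d \<le> j" "arr j = dep d" "dep j = arr d"
      and bet: "\<forall>e'\<in>Ev. d < e' \<and> e' < j \<longrightarrow> dep e' \<noteq> dep d \<and> arr e' \<noteq> dep d"
      using A2[OF dd(1) pp(1) dd(2)] dd(3) y_def by auto
    have "\<not> p < j" using bet pp(1) dd y_def by auto
    moreover have "j \<noteq> p"
    proof
      assume "j = p"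
      hence "dep d \<noteq> arr d" "{dep d, arr d} = c" using j pp by auto
      hence "p \<le> d" using fcmin[OF dd(1)] p_def by simp
      thus False using dd by simp
    qed
    moreover have "\<not> j < p"
    proof
      assume jp: "j < p"
      obtain k where k: "k \<in> Ev" "j < k" "k \<le> p" "dep k = arr j" using nextE[OF j(1) pp(1) jp] by auto
      have "k \<noteq> p" using k j dd pp(2) y_def by auto
      hence "k \<in> DD" using k j dd unfolding DD_def by auto
      thus False using dmax k j by fastforce
    qed
    ultimately show False by simp
  qed
  have up: "card C \<le> card (V - {v0})"
  proof (rule card_inj_on_le[where f="\<lambda>c. arr (fc c)"])
    show "(\<lambda>c. arr (fc c)) ` C \<subseteq> V - {v0}"
    proof
      fix y assume "y \<in> (\<lambda>c. arr (fc c)) ` C"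
      then obtain c where c: "c \<in> C" "y = arr (fc c)" by auto
      have P: "fc c \<in> Ev" "dep (fc c) \<noteq> arr (fc c)" using fcP[OF c(1)] by auto
      have "y \<noteq> v0"
      proof (cases "fc c = p0")
        case True thus ?thesis using P c v0_def by auto
      next
        case False
        hence "p0 < fc c" using p0min[OF P(1)] by simp
        moreover have "vis v0 p0" unfolding vis_def v0_def using p0E by simp
        ultimately show ?thesis using F2[OF c(1)] c by auto
      qed
      thus "y \<in> V - {v0}" using P c V_def by auto
    qed
    show "inj_on (\<lambda>c. arr (fc c)) C"
    proof (rule inj_onI)
      fix c c' assume cc: "c \<in> C" "c' \<in> C" "arr (fc c) = arr (fc c')"
      show "c = c'"
      proof (rule ccontr)
        assume ne: "c \<noteq> c'"
        have P: "fc c \<in> Ev" "{dep (fc c), arr (fc c)} = c" using fcP[OF cc(1)] by blast+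
        have P': "fc c' \<in> Ev" "{dep (fc c'), arr (fc c')} = c'" using fcP[OF cc(2)] by blast+
        have "fc c \<noteq> fc c'"
        proof
          assume "fc c = fc c'"
          hence "c = c'" using P(2) P'(2) by metis
          thus False using ne by contradiction
        qed
        hence "fc c < fc c' \<or> fc c' < fc c" by auto
        thus False
        proof
          assume "fc c < fc c'"
          moreover have "vis (arr (fc c')) (fc c)" using cc P vis_def by simp
          ultimately show False using F2[OF cc(2)] by blast
        next
          assume "fc c' < fc c"
          moreover have "vis (arr (fc c)) (fc c')" using cc P' vis_def by simp
          ultimately show False using F2[OF cc(1)] by blast
        qed
      qed
    qed
  qed (use finV in simp)
  have "card (V - {v0}) + 1 = card V" using v0V finV
    by (metis One_nat_def Suc_pred card_Diff_singleton card_gt_0_iff empty_iff add.commute plus_1_eq_Suc)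
  thus ?thesis using low up unfolding C_def V_def by simp
qed




lemma seg_Cons: "seg u i (Suc n) = u i # seg u (Suc i) n"
  by (simp add: seg_def upt_conv_Cons del: upt_Suc)

lemma factor_Cons: "is_factor u (a # x) \<longleftrightarrow> (\<exists>i\<ge>1. seg u i (length x) = x \<and> u(i-1) = a)"
proof
  assume "is_factor u (a # x)"
  then obtain q where "a # x = seg u q (Suc (length x))" unfolding is_factor_seg by auto
  hence "u q = a" "seg u (Suc q) (length x) = x" unfolding seg_Cons by auto
  thus "\<exists>i\<ge>1. seg u i (length x) = x \<and> u(i-1) = a" by (intro exI[of _ "Suc q"]) auto
next
  assume "\<exists>i\<ge>1. seg u i (length x) = x \<and> u(i-1) = a"
  then obtain i where i: "i \<ge> 1" "seg u i (length x) = x" "u(i-1) = a" by auto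
  hence "seg u (i-1) (Suc (length x)) = a # x" unfolding seg_Cons by simp
  thus "is_factor u (a # x)" unfolding is_factor_seg by (metis length_Cons)
qed

lemma factor_snoc: "is_factor u (x @ [b]) \<longleftrightarrow> (\<exists>i. seg u i (length x) = x \<and> u(i + length x) = b)"
proof
  assume "is_factor u (x @ [b])"
  then obtain q where "x @ [b] = seg u q (Suc (length x))" unfolding is_factor_seg by auto
  hence "seg u q (length x) = x" "u (q + length x) = b" unfolding seg_Suc by auto
  thus "\<exists>i. seg u i (length x) = x \<and> u(i + length x) = b" by blast
next
  assume "\<exists>i. seg u i (length x) = x \<and> u(i + length x) = b"
  then obtain i where "seg u i (length x) = x" "u(i + length x) = b" by auto
  hence "seg u i (Suc (length x)) = x @ [b]" unfolding seg_Suc by simp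
  thus "is_factor u (x @ [b])" unfolding is_factor_seg by (metis length_append_singleton)
qed

lemma factor_both: "is_factor u (a # x @ [b]) \<longleftrightarrow> (\<exists>i\<ge>1. seg u i (length x) = x \<and> u(i-1) = a \<and> u(i + length x) = b)"
proof -
  have "is_factor u (a # x @ [b]) \<longleftrightarrow> (\<exists>i\<ge>1. seg u i (Suc (length x)) = x @ [b] \<and> u(i-1) = a)"
    using factor_Cons[of u a "x @ [b]"] by simp
  also have "\<dots> \<longleftrightarrow> (\<exists>i\<ge>1. seg u i (length x) = x \<and> u(i-1) = a \<and> u(i + length x) = b)"
    by (simp add: seg_Suc, blast)
  finally show ?thesis .
qed

lemma factor_rev: assumes c: "closed_under_reversal u" shows "is_factor u (rev x) \<longleftrightarrow> is_factor u x"
proof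
  assume "is_factor u (rev x)"
  hence "is_factor u (rev (rev x))" using c unfolding closed_under_reversal_def by blast
  thus "is_factor u x" by simp
next
  assume "is_factor u x"
  thus "is_factor u (rev x)" using c unfolding closed_under_reversal_def by blast
qed

lemma G:
  assumes Q: "QP u n0" and n: "n0 < Suc (length ww)" and d: "1 \<le> d"
  and vd: "seg u (d-1) (Suc (length ww)) = a # ww"
  and ex: "\<exists>p. d-1 < p \<and> Vo u (a#ww) p"
  shows "\<exists>j\<ge>d. seg u j (Suc (length ww)) = rev ww @ [a] \<and> u(j-1) = u(d + length ww) \<and>
     (\<forall>p. d-1 < p \<and> p < j \<longrightarrow> \<not> Vo u (a#ww) p)"
proof -
  define n where "n = length ww"
  define v where "v = a # ww"
  define j where "j = (LEAST p. d-1 < p \<and> Vo u v p)"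
  have ex': "\<exists>p. d-1 < p \<and> Vo u v p" using ex v_def by simp
  have jP: "d-1 < j \<and> Vo u v j" unfolding j_def using ex' by (rule LeastI_ex)
  have jmin: "\<not> Vo u v p" if "d-1 < p" "p < j" for p
    using not_less_Least[of p "\<lambda>p. d-1 < p \<and> Vo u v p"] that unfolding j_def by blast
  have lv: "length v = Suc n" using v_def n_def by simp
  have P: "\<forall>t < j-(d-1)+length v. u((d-1)+t) = u(j+length v-1-t)"
  proof (rule R[OF Q])
    show "n0 < length v" using n v_def by simp
    show "seg u (d - 1) (length v) = v" using vd v_def by simp
    show "d - 1 < j" using jP by simp
    show "Vo u v j" using jP by simp
    show "\<forall>k. d - 1 < k \<and> k < j \<longrightarrow> \<not> Vo u v k" using jmin by blast
  qed
  have jd: "d \<le> j" using jP d by linarith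
  have "seg u j (Suc n) = rev (seg u (d-1) (Suc n))" unfolding seg_rev_iff
  proof (intro allI impI)
    fix t assume t: "t < Suc n"
    have lt: "n - t < j-(d-1)+length v" using t jd lv by simp
    have "u((d-1)+(n-t)) = u(j+length v-1-(n-t))" using P lt by blast
    moreover have "j+length v-1-(n-t) = j + t" using t lv by simp
    moreover have "(d-1)+(n-t) = d - 1 + Suc n - 1 - t" using t d by simp
    ultimately show "u (j + t) = u (d - 1 + Suc n - 1 - t)" by simp
  qed
  hence s1: "seg u j (Suc n) = rev ww @ [a]" using vd n_def by simp
  have lt2: "Suc n < j-(d-1)+length v" using jd lv d by simp
  have "u((d-1)+Suc n) = u(j+length v-1-Suc n)" using P lt2 by blast
  moreover have "(d-1)+Suc n = d + n" using d by simp
  moreover have "j+length v-1-Suc n = j - 1" using lv by simp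
  ultimately have s2: "u(j-1) = u(d+n)" by simp
  show ?thesis using s1 s2 jd jmin v_def n_def by auto
qed




lemma card_pairs:
  assumes finE: "finite E" and sym: "\<And>a b. (a,b) \<in> E \<Longrightarrow> (b,a) \<in> E"
  shows "card E = card {a. (a,a) \<in> E} + 2 * card {{a,b} | a b. (a,b) \<in> E \<and> a \<noteq> b}"
proof -
  define Ed where "Ed = {p\<in>E. fst p = snd p}"
  define En where "En = {p\<in>E. fst p \<noteq> snd p}"
  define C where "C = {{a,b} | a b. (a,b) \<in> E \<and> a \<noteq> b}"
  have "E = Ed \<union> En" "Ed \<inter> En = {}" unfolding Ed_def En_def by auto
  hence cE: "card E = card Ed + card En" using finE
    by (metis card_Un_disjoint finite_Un)
  have "Ed = (\<lambda>a. (a,a)) ` {a. (a,a) \<in> E}" unfolding Ed_def by auto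
  hence cEd: "card Ed = card {a. (a,a) \<in> E}" by (simp add: card_image inj_on_def)
  define F where "F c = {p\<in>En. {fst p, snd p} = c}" for c
  have En: "En = (\<Union>c\<in>C. F c)" unfolding En_def F_def C_def by fastforce
  have finC: "finite C"
  proof -
    have "C = (\<lambda>p. {fst p, snd p}) ` En" unfolding C_def En_def by force
    thus ?thesis using finE En_def by simp
  qed
  have F2: "card (F c) = 2" if "c \<in> C" for c
  proof -
    from that obtain a b where ab: "c = {a,b}" "(a,b) \<in> E" "a \<noteq> b" unfolding C_def by blast
    have "F c = {(a,b),(b,a)}" unfolding F_def En_def using ab sym by (auto simp: doubleton_eq_iff)
    thus ?thesis using ab by simp
  qed
  have "card En = (\<Sum>c\<in>C. card (F c))" unfolding En
  proof (rule card_UN_disjoint[OF finC])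
    show "\<forall>c\<in>C. finite (F c)" unfolding F_def En_def using finE by auto
    show "\<forall>c\<in>C. \<forall>c'\<in>C. c \<noteq> c' \<longrightarrow> F c \<inter> F c' = {}" unfolding F_def by auto
  qed
  also have "\<dots> = 2 * card C" using F2 by simp
  finally show ?thesis using cE cEd C_def by simp
qed

lemma case_pal:
  assumes finA: "finite A" and uA: "\<forall>i. u i \<in> A" and cr: "closed_under_reversal u" and Q: "QP u n0"
  and bs: "bispecial u w" and wn: "n0 < length w" and wp: "rev w = w"
  shows "bilateral_mult u w = int (card (ext_eq u w)) - 1"
proof -
  define n where "n = length w"
  define Ev where "Ev = {i. 1 \<le> i \<and> seg u i n = w}"
  define dep where "dep i = u (i-1)" for i
  define arr where "arr i = u (i+n)" for i
  have Lc: "ext_left u w = {a. \<exists>i\<in>Ev. u(i-1) = a}"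
    unfolding ext_left_def Ev_def n_def factor_Cons by auto
  have RL: "ext_right u w = ext_left u w"
  proof -
    have "is_factor u (w @ [b]) \<longleftrightarrow> is_factor u (b # w)" for b
      using factor_rev[OF cr, of "w @ [b]"] wp by simp
    thus ?thesis unfolding ext_right_def ext_left_def by simp
  qed
  have Ec: "ext_both u w = {(a,b). \<exists>i\<in>Ev. u(i-1) = a \<and> u(i+n) = b}"
    unfolding ext_both_def Ev_def n_def factor_both by auto
  have V: "dep ` Ev \<union> arr ` Ev = ext_left u w"
  proof -
    have "arr ` Ev \<subseteq> ext_right u w" unfolding ext_right_def factor_snoc arr_def Ev_def n_def by auto
    moreover have "dep ` Ev = ext_left u w" unfolding Lc dep_def by auto
    ultimately show ?thesis using RL by auto
  qed
  have finL: "finite (ext_left u w)"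
    by (rule finite_subset[OF _ finA]) (use uA in \<open>auto simp: Lc\<close>)
  have "Ev \<noteq> {}"
  proof -
    have "card (ext_left u w) \<ge> 2" using bs bispecial_def by blast
    hence "ext_left u w \<noteq> {}" by auto
    thus ?thesis using Lc by auto
  qed
  have WC: "card {{dep i, arr i} | i. i \<in> Ev \<and> dep i \<noteq> arr i} + 1 = card (dep ` Ev \<union> arr ` Ev)"
  proof (rule walk_count)
    show "Ev \<noteq> {}" by fact
    show "finite (dep ` Ev \<union> arr ` Ev)" using V finL by simp
  next
    fix i j assume ij: "i \<in> Ev" "j \<in> Ev" "i < j" "\<forall>k\<in>Ev. \<not> (i < k \<and> k < j)"
    have P: "\<forall>t < j-i+length w. u(i+t) = u(j+length w-1-t)"
    proof (rule R[OF Q wn])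
      show "seg u i (length w) = w" using ij Ev_def n_def by simp
      show "Vo u w j" using ij unfolding Ev_def n_def Vo_def by simp
      show "\<forall>k. i < k \<and> k < j \<longrightarrow> \<not> Vo u w k" using ij wp unfolding Vo_def Ev_def n_def by auto
    qed (rule ij)
    thus "arr i = dep j" using P[rule_format, of n] ij unfolding arr_def dep_def n_def by simp
  next
    fix d e assume de: "d \<in> Ev" "e \<in> Ev" "d < e" "dep e = dep d \<or> arr e = dep d"
    define a where "a = u(d-1)"
    have d1: "1 \<le> d" "seg u d n = w" using de Ev_def by auto
    have vd: "seg u (d-1) (Suc (length w)) = a # w" using d1 unfolding a_def seg_Cons n_def by simp
    have VoE: "Vo u (a#w) p \<longleftrightarrow> seg u p (Suc n) = a # w \<or> seg u p (Suc n) = w @ [a]" for p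
      unfolding Vo_def n_def using wp by simp
    have depc: "i \<in> Ev \<Longrightarrow> dep i = a \<longleftrightarrow> Vo u (a#w) (i-1) \<and> seg u (i-1) (Suc n) = a # w" for i
      unfolding VoE dep_def Ev_def by (auto simp: seg_Cons)
    have arrc: "i \<in> Ev \<Longrightarrow> arr i = a \<longleftrightarrow> seg u i (Suc n) = w @ [a]" for i
      unfolding arr_def Ev_def by (auto simp: seg_Suc)
    have "\<exists>p. d-1 < p \<and> Vo u (a#w) p"
    proof (cases "dep e = dep d")
      case True
      hence "Vo u (a#w) (e-1)" using depc[OF de(2)] a_def dep_def by simp
      thus ?thesis using de d1 by (intro exI[of _ "e-1"]) auto
    next
      case False
      hence "arr e = a" using de a_def dep_def by simp
      hence "Vo u (a#w) e" using arrc[OF de(2)] VoE by simp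
      thus ?thesis using de d1 by (intro exI[of _ e]) auto
    qed
    from G[OF Q _ d1(1) vd this] wn obtain j where j: "j \<ge> d" "seg u j (Suc (length w)) = rev w @ [a]"
      "u(j-1) = u(d + length w)" "\<forall>p. d-1 < p \<and> p < j \<longrightarrow> \<not> Vo u (a#w) p" by auto
    have jE: "j \<in> Ev" "arr j = a" using j d1 wp unfolding Ev_def arr_def n_def by (auto simp: seg_Suc)
    show "\<exists>j\<in>Ev. d \<le> j \<and> arr j = dep d \<and> dep j = arr d \<and>
        (\<forall>e'\<in>Ev. d < e' \<and> e' < j \<longrightarrow> dep e' \<noteq> dep d \<and> arr e' \<noteq> dep d)"
    proof (intro bexI[of _ j] conjI ballI impI)
      show "arr j = dep d" using jE a_def dep_def by simp
      show "dep j = arr d" using j dep_def arr_def n_def by simp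
      fix e' assume e': "e' \<in> Ev" "d < e' \<and> e' < j"
      show "dep e' \<noteq> dep d"
      proof
        assume "dep e' = dep d"
        hence "Vo u (a#w) (e'-1)" using depc[OF e'(1)] a_def dep_def by simp
        moreover have "d - 1 < e' - 1" "e' - 1 < j" using e' d1 by auto
        ultimately show False using j(4) by blast
      qed
      show "arr e' \<noteq> dep d"
      proof
        assume "arr e' = dep d"
        hence "Vo u (a#w) e'" using arrc[OF e'(1)] VoE a_def dep_def by simp
        moreover have "d - 1 < e'" "e' < j" using e' d1 by auto
        ultimately show False using j(4) by blast
      qed
    qed (use j jE in auto)
  qed
  have Ceq: "{{dep i, arr i} | i. i \<in> Ev \<and> dep i \<noteq> arr i} = {{a,b} | a b. (a,b) \<in> ext_both u w \<and> a \<noteq> b}"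
    unfolding Ec dep_def arr_def by blast
  have finE: "finite (ext_both u w)"
    by (rule finite_subset[of _ "A \<times> A"]) (use uA finA in \<open>auto simp: Ec\<close>)
  have sym: "(b,a) \<in> ext_both u w" if "(a,b) \<in> ext_both u w" for a b
  proof -
    have "is_factor u (a # w @ [b])" using that unfolding ext_both_def by simp
    hence "is_factor u (rev (a # w @ [b]))" using factor_rev[OF cr] by blast
    thus ?thesis using wp unfolding ext_both_def by simp
  qed
  have eqc: "ext_eq u w = {a. (a,a) \<in> ext_both u w}" unfolding ext_eq_def ext_both_def by simp
  have cE: "card (ext_both u w) = card (ext_eq u w) + 2 * card {{a,b} | a b. (a,b) \<in> ext_both u w \<and> a \<noteq> b}"
    using card_pairs[OF finE sym] eqc by simp
  show ?thesis unfolding bilateral_mult_def using cE WC Ceq V RL by simp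
qed




lemma case_nonpal:
  assumes finA: "finite A" and uA: "\<forall>i. u i \<in> A" and cr: "closed_under_reversal u" and Q: "QP u n0"
  and bs: "bispecial u w" and wn: "n0 < length w" and wp: "rev w \<noteq> w"
  shows "bilateral_mult u w = 0"
proof -
  define n where "n = length w"
  define Ev where "Ev = {i. 1 \<le> i \<and> (seg u i n = w \<or> seg u i n = rev w)}"
  define dep where "dep i = (seg u i n = w, u (i-1))" for i
  define arr where "arr i = (seg u i n \<noteq> w, u (i+n))" for i
  have Lc: "ext_left u w = {a. \<exists>i\<ge>1. seg u i n = w \<and> u(i-1) = a}"
    unfolding ext_left_def n_def factor_Cons by auto
  have Lc2: "ext_left u w = {a. \<exists>i. seg u i n = rev w \<and> u(i+n) = a}"
  proof -
    have "is_factor u (a # w) \<longleftrightarrow> is_factor u (rev w @ [a])" for a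
      using factor_rev[OF cr, of "a # w"] by simp
    thus ?thesis unfolding ext_left_def factor_snoc n_def by simp
  qed
  have Rc: "ext_right u w = {b. \<exists>i. seg u i n = w \<and> u(i+n) = b}"
    unfolding ext_right_def n_def factor_snoc by auto
  have Rc2: "ext_right u w = {b. \<exists>i\<ge>1. seg u i n = rev w \<and> u(i-1) = b}"
  proof -
    have "is_factor u (w @ [b]) \<longleftrightarrow> is_factor u (b # rev w)" for b
      using factor_rev[OF cr, of "w @ [b]"] by simp
    thus ?thesis unfolding ext_right_def factor_Cons n_def by simp
  qed
  have Ec: "ext_both u w = {(a,b). \<exists>i\<ge>1. seg u i n = w \<and> u(i-1) = a \<and> u(i+n) = b}"
    unfolding ext_both_def n_def factor_both by auto
  have Ec2: "ext_both u w = {(a,b). \<exists>i\<ge>1. seg u i n = rev w \<and> u(i-1) = b \<and> u(i+n) = a}"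
  proof -
    have "is_factor u (a # w @ [b]) \<longleftrightarrow> is_factor u (b # rev w @ [a])" for a b
      using factor_rev[OF cr, of "a # w @ [b]"] by simp
    thus ?thesis unfolding ext_both_def factor_both n_def by simp
  qed
  have V: "dep ` Ev \<union> arr ` Ev = {True} \<times> ext_left u w \<union> {False} \<times> ext_right u w"
  proof
    show "dep ` Ev \<union> arr ` Ev \<subseteq> {True} \<times> ext_left u w \<union> {False} \<times> ext_right u w"
    proof
      fix x assume "x \<in> dep ` Ev \<union> arr ` Ev"
      then obtain i where i: "i \<in> Ev" "x = dep i \<or> x = arr i" by auto
      show "x \<in> {True} \<times> ext_left u w \<union> {False} \<times> ext_right u w"
      proof (cases "seg u i n = w")
        case True
        thus ?thesis using i unfolding Lc Rc dep_def arr_def Ev_def by auto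
      next
        case False
        hence "seg u i n = rev w" using i Ev_def by auto
        thus ?thesis using i False unfolding Lc2 Rc2 dep_def arr_def Ev_def by auto
      qed
    qed
  next
    show "{True} \<times> ext_left u w \<union> {False} \<times> ext_right u w \<subseteq> dep ` Ev \<union> arr ` Ev"
    proof
      fix x assume x: "x \<in> {True} \<times> ext_left u w \<union> {False} \<times> ext_right u w"
      show "x \<in> dep ` Ev \<union> arr ` Ev"
      proof (cases "fst x")
        case True
        then obtain i where "i \<ge> 1" "seg u i n = w" "u(i-1) = snd x" using x Lc by auto
        hence "i \<in> Ev" "dep i = x" using True unfolding Ev_def dep_def by (auto simp: prod_eq_iff)
        thus ?thesis by blast
      next
        case False
        then obtain i where "i \<ge> 1" "seg u i n = rev w" "u(i-1) = snd x" using x Rc2 by auto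
        hence "i \<in> Ev" "dep i = x" using False wp unfolding Ev_def dep_def by (auto simp: prod_eq_iff)
        thus ?thesis by blast
      qed
    qed
  qed
  have finL: "finite (ext_left u w)"
    by (rule finite_subset[OF _ finA]) (use uA in \<open>auto simp: Lc\<close>)
  have finR: "finite (ext_right u w)"
    by (rule finite_subset[OF _ finA]) (use uA in \<open>auto simp: Rc\<close>)
  have "Ev \<noteq> {}"
  proof -
    have "card (ext_left u w) \<ge> 2" using bs bispecial_def by blast
    hence "ext_left u w \<noteq> {}" by auto
    thus ?thesis using Lc Ev_def by auto
  qed
  have segV: "i \<in> Ev \<Longrightarrow> Vo u (seg u i n) k \<longleftrightarrow> seg u k n = w \<or> seg u k n = rev w" for i k
    unfolding Ev_def Vo_def by auto
  have WC: "card {{dep i, arr i} | i. i \<in> Ev \<and> dep i \<noteq> arr i} + 1 = card (dep ` Ev \<union> arr ` Ev)"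
  proof (rule walk_count)
    show "Ev \<noteq> {}" by fact
    show "finite (dep ` Ev \<union> arr ` Ev)" using V finL finR by simp
  next
    fix i j assume ij: "i \<in> Ev" "j \<in> Ev" "i < j" "\<forall>k\<in>Ev. \<not> (i < k \<and> k < j)"
    have P: "\<forall>t < j-i+length (seg u i n). u(i+t) = u(j+length (seg u i n)-1-t)"
    proof (rule R[OF Q])
      show "n0 < length (seg u i n)" using wn n_def by simp
      show "Vo u (seg u i n) j" using ij segV Ev_def by auto
      show "\<forall>k. i < k \<and> k < j \<longrightarrow> \<not> Vo u (seg u i n) k" using ij segV unfolding Ev_def by auto
    qed (use ij in auto)
    have "seg u j n = rev (seg u i n)" unfolding seg_rev_iff
    proof (intro allI impI)
      fix t assume t: "t < n"
      have P': "\<forall>t<j-i+n. u(i+t) = u(j+n-1-t)" using P by simp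
      have lt: "n-1-t < j-i+n" using t ij by simp
      have "u(i+(n-1-t)) = u(j+n-1-(n-1-t))" using P' lt by blast
      moreover have "i+(n-1-t) = i+n-1-t" using t by simp
      moreover have "j+n-1-(n-1-t) = j+t" using t by simp
      ultimately show "u (j + t) = u (i + n - 1 - t)" by simp
    qed
    moreover have "u(i+n) = u(j-1)" using P[rule_format, of n] ij by simp
    moreover have "seg u i n = w \<or> seg u i n = rev w" using ij Ev_def by auto
    ultimately show "arr i = dep j" unfolding arr_def dep_def using wp by auto
  next
    fix d e assume de: "d \<in> Ev" "e \<in> Ev" "d < e" "dep e = dep d \<or> arr e = dep d"
    define a where "a = u(d-1)"
    define ww where "ww = seg u d n"
    have d1: "1 \<le> d" "ww = w \<or> ww = rev w" using de Ev_def ww_def by auto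
    have lww: "length ww = n" using ww_def by simp
    have vd: "seg u (d-1) (Suc (length ww)) = a # ww" using d1 unfolding a_def seg_Cons lww ww_def by simp
    have VoE: "Vo u (a#ww) p \<longleftrightarrow> seg u p (Suc n) = a # ww \<or> seg u p (Suc n) = rev ww @ [a]" for p
      unfolding Vo_def using lww by simp
    have dd: "dep d = (ww = w, a)" unfolding dep_def ww_def a_def by simp
    have depc: "dep i = dep d \<longleftrightarrow> seg u (i-1) (Suc n) = a # ww" if iE: "i \<in> Ev" for i
    proof -
      have i1: "1 \<le> i" and si: "seg u i n = w \<or> seg u i n = rev w" using iE Ev_def by auto
      have sc: "seg u (i-1) (Suc n) = u(i-1) # seg u i n" using i1 by (simp add: seg_Cons)
      have "(seg u i n = w \<longleftrightarrow> ww = w) \<longleftrightarrow> seg u i n = ww" using si d1(2) wp by auto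
      moreover have "dep i = (seg u i n = w, u(i-1))" by (simp add: dep_def)
      ultimately show ?thesis unfolding sc dd by auto
    qed
    have arrc: "arr i = dep d \<longleftrightarrow> seg u i (Suc n) = rev ww @ [a]" if iE: "i \<in> Ev" for i
    proof -
      have si: "seg u i n = w \<or> seg u i n = rev w" using iE Ev_def by auto
      have sc: "seg u i (Suc n) = seg u i n @ [u(i+n)]" by (simp add: seg_Suc)
      have "(seg u i n \<noteq> w \<longleftrightarrow> ww = w) \<longleftrightarrow> seg u i n = rev ww" using si d1(2) wp by auto
      thus ?thesis unfolding sc dd arr_def by auto
    qed
    have n0w: "n0 < Suc (length ww)" using wn lww n_def by simp
    have "\<exists>p. d-1 < p \<and> Vo u (a#ww) p"
    proof (cases "dep e = dep d")
      case True
      hence "Vo u (a#ww) (e-1)" using depc[OF de(2)] VoE by simp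
      thus ?thesis using de d1 by (intro exI[of _ "e-1"]) auto
    next
      case False
      hence "arr e = dep d" using de by simp
      hence "Vo u (a#ww) e" using arrc[OF de(2)] VoE by simp
      thus ?thesis using de d1 by (intro exI[of _ e]) auto
    qed
    from G[OF Q n0w d1(1) vd this] obtain j where j0: "j \<ge> d" "seg u j (Suc (length ww)) = rev ww @ [a]"
      "u(j-1) = u(d + length ww)" "\<forall>p. d-1 < p \<and> p < j \<longrightarrow> \<not> Vo u (a#ww) p" by blast
    have j: "j \<ge> d" "seg u j (Suc n) = rev ww @ [a]"
      "u(j-1) = u(d + n)" "\<forall>p. d-1 < p \<and> p < j \<longrightarrow> \<not> Vo u (a#ww) p" using j0 lww by auto
    have sj: "seg u j n = rev ww" using j(2) lww by (simp add: seg_Suc)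
    have jEv: "j \<in> Ev"
    proof -
      have "1 \<le> j" using j(1) d1(1) by simp
      moreover have "seg u j n = w \<or> seg u j n = rev w" using sj d1(2) by auto
      ultimately show ?thesis unfolding Ev_def by simp
    qed
    have jarr: "arr j = dep d" using arrc[OF jEv] j(2) by simp
    have ad: "arr d = (ww \<noteq> w, u(d+n))" unfolding arr_def ww_def by simp
    have dj: "dep j = (rev ww = w, u(j-1))" unfolding dep_def using sj by simp
    have rw: "(rev ww = w) = (ww \<noteq> w)" using d1(2) wp by auto
    show "\<exists>j\<in>Ev. d \<le> j \<and> arr j = dep d \<and> dep j = arr d \<and>
        (\<forall>e'\<in>Ev. d < e' \<and> e' < j \<longrightarrow> dep e' \<noteq> dep d \<and> arr e' \<noteq> dep d)"
    proof (intro bexI[of _ j] conjI ballI impI)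
      show "arr j = dep d" by (rule jarr)
      show "dep j = arr d" unfolding ad dj rw using j(3) by simp
      fix e' assume e': "e' \<in> Ev" "d < e' \<and> e' < j"
      show "dep e' \<noteq> dep d"
      proof
        assume "dep e' = dep d"
        hence "Vo u (a#ww) (e'-1)" using depc[OF e'(1)] VoE by simp
        moreover have "d - 1 < e' - 1" "e' - 1 < j" using e' d1 by auto
        ultimately show False using j(4) by blast
      qed
      show "arr e' \<noteq> dep d"
      proof
        assume "arr e' = dep d"
        hence "Vo u (a#ww) e'" using arrc[OF e'(1)] VoE by simp
        moreover have "d - 1 < e'" "e' < j" using e' d1 by auto
        ultimately show False using j(4) by blast
      qed
    qed (use j jEv in auto)
  qed
  have NL: "i \<in> Ev \<Longrightarrow> dep i \<noteq> arr i" for i unfolding dep_def arr_def by auto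
  have Ceq: "{{dep i, arr i} | i. i \<in> Ev \<and> dep i \<noteq> arr i} = (\<lambda>(a,b). {(True,a),(False,b)}) ` ext_both u w"
  proof
    show "{{dep i, arr i} | i. i \<in> Ev \<and> dep i \<noteq> arr i} \<subseteq> (\<lambda>(a,b). {(True,a),(False,b)}) ` ext_both u w"
    proof
      fix c assume "c \<in> {{dep i, arr i} | i. i \<in> Ev \<and> dep i \<noteq> arr i}"
      then obtain i where i: "i \<in> Ev" "c = {dep i, arr i}" by auto
      show "c \<in> (\<lambda>(a,b). {(True,a),(False,b)}) ` ext_both u w"
      proof (cases "seg u i n = w")
        case True
        have i1: "1 \<le> i" using i Ev_def by simp
        have m: "(u(i-1), u(i+n)) \<in> ext_both u w" unfolding Ec using i1 True by blast
        have "c = {(True,u(i-1)),(False,u(i+n))}" using i True unfolding dep_def arr_def by simp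
        thus ?thesis using m by (intro image_eqI[where x="(u(i-1), u(i+n))"]) simp_all
      next
        case False
        hence "seg u i n = rev w" using i Ev_def by auto
        have i1: "1 \<le> i" using i Ev_def by simp
        have m: "(u(i+n), u(i-1)) \<in> ext_both u w" unfolding Ec2 using i1 \<open>seg u i n = rev w\<close> by blast
        have "c = {(True,u(i+n)),(False,u(i-1))}" using i False unfolding dep_def arr_def by auto
        thus ?thesis using m by (intro image_eqI[where x="(u(i+n), u(i-1))"]) simp_all
      qed
    qed
  next
    show "(\<lambda>(a,b). {(True,a),(False,b)}) ` ext_both u w \<subseteq> {{dep i, arr i} | i. i \<in> Ev \<and> dep i \<noteq> arr i}"
    proof
      fix c assume "c \<in> (\<lambda>(a,b). {(True,a),(False,b)}) ` ext_both u w"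
      then obtain a b where ab: "(a,b) \<in> ext_both u w" "c = {(True,a),(False,b)}" by auto
      then obtain i where "i \<ge> 1" "seg u i n = w" "u(i-1) = a" "u(i+n) = b" unfolding Ec by auto
      hence "i \<in> Ev" "c = {dep i, arr i}" using ab unfolding Ev_def dep_def arr_def by simp_all
      thus "c \<in> {{dep i, arr i} | i. i \<in> Ev \<and> dep i \<noteq> arr i}" using NL by blast
    qed
  qed
  have inj: "inj_on (\<lambda>(a,b). {(True,a),(False,b)}) (ext_both u w)"
  proof (rule inj_onI, clarify)
    fix a b a' b' assume eq: "{(True,a),(False,b)} = {(True,a'),(False,b')}"
    have "(True,a) \<in> {(True,a'),(False,b')}" using eq by blast
    hence "a = a'" by simp
    moreover have "(False,b) \<in> {(True,a'),(False,b')}" using eq by blast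
    hence "b = b'" by simp
    ultimately show "a = a' \<and> b = b'" by simp
  qed
  have cC: "card (ext_both u w) = card {{dep i, arr i} | i. i \<in> Ev \<and> dep i \<noteq> arr i}"
    unfolding Ceq by (simp add: card_image[OF inj])
  have cV: "card ({True} \<times> ext_left u w \<union> {False} \<times> ext_right u w) = card (ext_left u w) + card (ext_right u w)"
    using finL finR by (subst card_Un_disjoint) (auto simp: card_cartesian_product)
  show ?thesis unfolding bilateral_mult_def using WC cC cV V by simp
qed

theorem theorem21:
  fixes u :: "nat \<Rightarrow> 'a" and A :: "'a set"
  assumes "finite A"
    and "\<forall>i. u i \<in> A"
    and "closed_under_reversal u"
    and "finite_defect u"
  shows "\<exists>K::nat. \<forall>w. bispecial u w \<and> length w \<ge> K \<longrightarrow>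
           (w \<noteq> rev w \<longrightarrow> bilateral_mult u w = 0) \<and>
           (w = rev w \<longrightarrow> bilateral_mult u w = int (card (ext_eq u w)) - 1)"
proof -
  obtain n0 where Q: "QP u n0" using Q_I[OF assms(4)] unfolding QP_def by blast
  show ?thesis
  proof (intro exI[of _ "Suc n0"] allI impI conjI)
    fix w assume w: "bispecial u w \<and> Suc n0 \<le> length w"
    show "w \<noteq> rev w \<Longrightarrow> bilateral_mult u w = 0"
      using case_nonpal[OF assms(1,2,3) Q] w by (metis Suc_le_eq)
    show "w = rev w \<Longrightarrow> bilateral_mult u w = int (card (ext_eq u w)) - 1"
      using case_pal[OF assms(1,2,3) Q] w by (metis Suc_le_eq)
  qed
qed


end
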